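(* Let $B$ be the 3-manifold that is the $T^2$-bundle over $S^1$ with monodromy $-\mathrm{id}:T^2\to T^2$ (induced by $\begin{pmatrix}-1&0\\0&-1\end{pmatrix}$ on $\mathbb{R}^2/\mathbb{Z}^2$). Then $B$ smoothly embeds in $S^4$. *)

theory Defs
  imports "HOL-Analysis.Analysis"
begin

coinductive smooth_map :: "('a::euclidean_space \<Rightarrow> 'b::real_normed_vector) \<Rightarrow> bool" where
  "(\<forall>x. f differentiable (at x)) \<Longrightarrow>
   (\<forall>i\<in>Basis. smooth_map (\<lambda>x. frechet_derivative f (at x) i)) \<Longrightarrow> smooth_map f"

text \<open>The deck group of the universal cover R^3 of the T^2-bundle over S^1 with
  monodromy -id: it is generated by (x,y,z) -> (x+1,y,z), (x,y,z) -> (x,y+1,z) and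
  (x,y,z) -> (-x,-y,z+1); its general element is
  (x,y,z) -> (e x + m, e y + n, z + k) with e = (-1)^k and k,m,n integers.\<close>
definition deck_equiv :: "real^3 \<Rightarrow> real^3 \<Rightarrow> bool" where
  "deck_equiv p q \<longleftrightarrow>
     (\<exists>k m n :: int. let e = (if even k then 1 else -1 :: real) in
        q $ 1 = e * p $ 1 + of_int m \<and>
        q $ 2 = e * p $ 2 + of_int n \<and>
        q $ 3 = p $ 3 + of_int k)"

text \<open>B = R^3 / deck group. A smooth embedding of the compact manifold B into
  S^4 = sphere 0 1 in R^5 is the same as a smooth map R^3 -> R^5 with values in the
  unit sphere, whose fibres are exactly the deck orbits (so it descends to an
  injective map on B) and whose differential is injective everywhere (immersion);
  an injective immersion of a compact manifold is an embedding.\<close>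
definition smooth_embeds_B_in_S4 :: "(real^3 \<Rightarrow> real^5) \<Rightarrow> bool" where
  "smooth_embeds_B_in_S4 f \<longleftrightarrow>
     smooth_map f \<and>
     (\<forall>p. f p \<in> sphere 0 1) \<and>
     (\<forall>p q. f p = f q \<longleftrightarrow> deck_equiv p q) \<and>
     (\<forall>p. inj (frechet_derivative f (at p)))"

end

theory Submission
  imports Defs
begin


inductive_set SM :: "(real^3 \<Rightarrow> real) set" where
  SM_const: "(\<lambda>x. c) \<in> SM"
| SM_coord: "(\<lambda>x. x $ j) \<in> SM"
| SM_add: "f \<in> SM \<Longrightarrow> g \<in> SM \<Longrightarrow> (\<lambda>x. f x + g x) \<in> SM"
| SM_diff: "f \<in> SM \<Longrightarrow> g \<in> SM \<Longrightarrow> (\<lambda>x. f x - g x) \<in> SM"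
| SM_uminus: "f \<in> SM \<Longrightarrow> (\<lambda>x. - f x) \<in> SM"
| SM_mult: "f \<in> SM \<Longrightarrow> g \<in> SM \<Longrightarrow> (\<lambda>x. f x * g x) \<in> SM"
| SM_sin: "f \<in> SM \<Longrightarrow> (\<lambda>x. sin (f x)) \<in> SM"
| SM_cos: "f \<in> SM \<Longrightarrow> (\<lambda>x. cos (f x)) \<in> SM"

lemma SM_deriv:
  assumes "f \<in> SM"
  shows "\<exists>D. (\<forall>x. (f has_derivative D x) (at x)) \<and> (\<forall>v. (\<lambda>x. D x v) \<in> SM)"
  using assms
proof induction
  case (SM_const c)
  show ?case by (rule exI[of _ "\<lambda>x v. 0"]) (auto intro: SM.intros)
next
  case (SM_coord j)
  show ?case
    by (rule exI[of _ "\<lambda>x v. v $ j"])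
       (auto intro: SM.intros bounded_linear_imp_has_derivative)
next
  case (SM_add f g)
  then obtain D1 D2 where "\<forall>x. (f has_derivative D1 x) (at x)" "\<forall>v. (\<lambda>x. D1 x v) \<in> SM"
    "\<forall>x. (g has_derivative D2 x) (at x)" "\<forall>v. (\<lambda>x. D2 x v) \<in> SM" by blast
  then show ?case
    by (intro exI[of _ "\<lambda>x v. D1 x v + D2 x v"]) (auto intro!: SM.intros derivative_eq_intros)
next
  case (SM_diff f g)
  then obtain D1 D2 where "\<forall>x. (f has_derivative D1 x) (at x)" "\<forall>v. (\<lambda>x. D1 x v) \<in> SM"
    "\<forall>x. (g has_derivative D2 x) (at x)" "\<forall>v. (\<lambda>x. D2 x v) \<in> SM" by blast
  then show ?case
    by (intro exI[of _ "\<lambda>x v. D1 x v - D2 x v"]) (auto intro!: SM.intros derivative_eq_intros)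
next
  case (SM_uminus f)
  then obtain D1 where "\<forall>x. (f has_derivative D1 x) (at x)" "\<forall>v. (\<lambda>x. D1 x v) \<in> SM" by blast
  then show ?case
    by (intro exI[of _ "\<lambda>x v. - D1 x v"]) (auto intro!: SM.intros derivative_eq_intros)
next
  case (SM_mult f g)
  then obtain D1 D2 where "\<forall>x. (f has_derivative D1 x) (at x)" "\<forall>v. (\<lambda>x. D1 x v) \<in> SM"
    "\<forall>x. (g has_derivative D2 x) (at x)" "\<forall>v. (\<lambda>x. D2 x v) \<in> SM" by blast
  then show ?case
    by (intro exI[of _ "\<lambda>x v. f x * D2 x v + D1 x v * g x"])
       (auto intro!: SM.intros derivative_eq_intros SM_mult.hyps)
next
  case (SM_sin f)
  then obtain D1 where "\<forall>x. (f has_derivative D1 x) (at x)" "\<forall>v. (\<lambda>x. D1 x v) \<in> SM" by blast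
  then show ?case
    by (intro exI[of _ "\<lambda>x v. cos (f x) * D1 x v"])
       (auto intro!: SM.intros derivative_eq_intros SM_sin.hyps)
next
  case (SM_cos f)
  then obtain D1 where "\<forall>x. (f has_derivative D1 x) (at x)" "\<forall>v. (\<lambda>x. D1 x v) \<in> SM" by blast
  then show ?case
    by (intro exI[of _ "\<lambda>x v. - (sin (f x) * D1 x v)"])
       (auto intro!: SM.intros derivative_eq_intros SM_cos.hyps)
qed

lemma has_derivative_vecI:
  fixes f :: "'a::real_normed_vector \<Rightarrow> real^'n"
  assumes "\<And>i. ((\<lambda>x. f x $ i) has_derivative (\<lambda>h. f' h $ i)) (at a)"
  shows "(f has_derivative f') (at a)"
  using assms
  by (subst has_derivative_componentwise_within)
     (auto simp: Basis_vec_def cart_eq_inner_axis[symmetric])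

lemma smooth_SM:
  fixes f :: "real^3 \<Rightarrow> real^'n"
  assumes "\<forall>k. (\<lambda>x. f x $ k) \<in> SM"
  shows "smooth_map f"
  using assms
proof (coinduction arbitrary: f)
  case (smooth_map f)
  then have "\<forall>k. \<exists>D. (\<forall>x. ((\<lambda>x. f x $ k) has_derivative D x) (at x)) \<and> (\<forall>v. (\<lambda>x. D x v) \<in> SM)"
    using SM_deriv by blast
  then obtain D where D: "\<And>k x. ((\<lambda>x. f x $ k) has_derivative D k x) (at x)"
     "\<And>k v. (\<lambda>x. D k x v) \<in> SM"
    by metis
  have fd: "(f has_derivative (\<lambda>v. \<chi> k. D k x v)) (at x)" for x
    by (rule has_derivative_vecI) (simp add: D)
  then have fe: "frechet_derivative f (at x) = (\<lambda>v. \<chi> k. D k x v)" for x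
    by (metis frechet_derivative_at)
  show ?case
    using fd D(2) by (auto simp: fe differentiable_def)
qed



lemma exhaust_5:
  fixes x :: 5
  shows "x = 1 \<or> x = 2 \<or> x = 3 \<or> x = 4 \<or> x = 5"
proof (induct x)
  case (of_int z)
  then have "z = 0 \<or> z = 1 \<or> z = 2 \<or> z = 3 \<or> z = 4" by fastforce
  then show ?case by auto
qed

lemma UNIV_5: "UNIV = {1, 2, 3, 4, 5::5}"
  using exhaust_5 by auto

lemma sum_5: "sum f (UNIV::5 set) = f 1 + f 2 + f 3 + f 4 + f 5"
  unfolding UNIV_5 by (simp add: ac_simps)

definition bt :: "real \<Rightarrow> real" where "bt y = pi/4 + (1/2) * cos (2*pi*y)"
definition ps :: "real \<Rightarrow> real" where "ps y = (1/2) * sin (2*pi*y)"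

definition E1 :: "real^3 \<Rightarrow> real" where
  "E1 p = cos (bt (p$2)) * cos (2*pi*p$3)"
definition E2 :: "real^3 \<Rightarrow> real" where
  "E2 p = cos (bt (p$2)) * sin (2*pi*p$3)"
definition E3 :: "real^3 \<Rightarrow> real" where
  "E3 p = sin (bt (p$2)) * (cos (ps (p$2)) * cos (2*pi*p$1))"
definition E4 :: "real^3 \<Rightarrow> real" where
  "E4 p = sin (bt (p$2)) * (cos (pi*p$3) * (cos (ps (p$2)) * sin (2*pi*p$1)) - sin (pi*p$3) * sin (ps (p$2)))"
definition E5 :: "real^3 \<Rightarrow> real" where
  "E5 p = sin (bt (p$2)) * (sin (pi*p$3) * (cos (ps (p$2)) * sin (2*pi*p$1)) + cos (pi*p$3) * sin (ps (p$2)))"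

definition emb :: "real^3 \<Rightarrow> real^5" where
  "emb p = (\<chi> k. if k = 1 then E1 p else if k = 2 then E2 p else if k = 3 then E3 p
             else if k = 4 then E4 p else E5 p)"

lemma emb_nth [simp]:
  "emb p $ 1 = E1 p" "emb p $ 2 = E2 p" "emb p $ 3 = E3 p" "emb p $ 4 = E4 p" "emb p $ 5 = E5 p"
  by (simp_all add: emb_def)

lemma emb_smooth: "smooth_map emb"
proof (rule smooth_SM, rule allI)
  fix k :: 5
  have "E1 \<in> SM" "E2 \<in> SM" "E3 \<in> SM" "E4 \<in> SM" "E5 \<in> SM"
    unfolding E1_def[abs_def] E2_def[abs_def] E3_def[abs_def] E4_def[abs_def] E5_def[abs_def]
      bt_def ps_def
    by (intro SM.intros)+
  then show "(\<lambda>x. emb x $ k) \<in> SM"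
    using exhaust_5[of k] by (auto simp: emb_nth[abs_def])
qed

lemma alg_sphere:
  fixes cB sB C S cP sP cT sT cH sH :: real
  assumes "cB^2+sB^2=1" "C^2+S^2=1" "cP^2+sP^2=1" "cT^2+sT^2=1" "cH^2+sH^2=1"
  shows "(cB*C)^2 + (cB*S)^2 + (sB*(cP*cT))^2 + (sB*(cH*(cP* sT) - sH* sP))^2
     + (sB*(sH*(cP* sT) + cH* sP))^2 = 1"
  using assms by algebra

lemma emb_sphere: "emb p \<in> sphere 0 1"
proof -
  have "inner (emb p) (emb p) = 1"
    unfolding inner_vec_def sum_5
    by (simp add: E1_def E2_def E3_def E4_def E5_def power2_eq_square[symmetric]
        alg_sphere)
  then show ?thesis by (simp add: norm_eq_sqrt_inner)
qed



lemma cos_sin_eq_int: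
  fixes a b :: real
  assumes "cos a = cos b" "sin a = sin b"
  shows "\<exists>n::int. a = b + 2*pi* of_int n"
proof -
  have "cos (a - b) = 1"
    using assms by (simp add: cos_diff power2_eq_square[symmetric])
  then obtain n :: int where "a - b = of_int n * 2 * pi" by (auto simp: cos_one_2pi_int)
  then show ?thesis by (intro exI[of _ n]) (simp add: algebra_simps)
qed

lemma cos_shift: fixes x :: real shows "cos (x + pi * of_int k) = (if even k then cos x else - cos x)"
  by (simp add: cos_add)

lemma sin_shift: fixes x :: real shows "sin (x + pi * of_int k) = (if even k then sin x else - sin x)"
  by (simp add: sin_add)

lemma cos2pi_int: fixes x :: real shows "cos (2*pi*(x + of_int m)) = cos (2*pi*x)"
proof -
  have "2*pi*(x + of_int m) = 2*pi*x + pi * of_int (2*m)" by (simp add: algebra_simps)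
  then show ?thesis by (simp only: cos_shift) simp
qed

lemma sin2pi_int: fixes x :: real shows "sin (2*pi*(x + of_int m)) = sin (2*pi*x)"
proof -
  have "2*pi*(x + of_int m) = 2*pi*x + pi * of_int (2*m)" by (simp add: algebra_simps)
  then show ?thesis by (simp only: sin_shift) simp
qed

lemma cospi_int: fixes x :: real shows "cos (pi*(x + of_int k)) = (if even k then cos (pi*x) else - cos (pi*x))"
  by (simp add: distrib_left cos_shift)

lemma sinpi_int: fixes x :: real shows "sin (pi*(x + of_int k)) = (if even k then sin (pi*x) else - sin (pi*x))"
  by (simp add: distrib_left sin_shift)

lemma bt_bounds: "0 < bt y" "bt y < pi/2"
proof -
  have "-1 \<le> cos (2*pi*y)" "cos (2*pi*y) \<le> 1" by auto
  then show "0 < bt y" "bt y < pi/2" using pi_gt3 unfolding bt_def by linarith+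
qed

lemma cos_bt_pos: "0 < cos (bt y)"
  using bt_bounds[of y] by (intro cos_gt_zero_pi) auto

lemma sin_bt_pos: "0 < sin (bt y)"
  using bt_bounds[of y] by (intro sin_gt_zero) auto

lemma ps_bounds: "-(pi/2) \<le> ps y" "ps y \<le> pi/2"
proof -
  have "-1 \<le> sin (2*pi*y)" "sin (2*pi*y) \<le> 1" by auto
  then show "-(pi/2) \<le> ps y" "ps y \<le> pi/2" using pi_gt3 unfolding ps_def by linarith+
qed

lemma cos_ps_pos: "0 < cos (ps y)"
proof -
  have "-1 \<le> sin (2*pi*y)" "sin (2*pi*y) \<le> 1" by auto
  then have "-(pi/2) < ps y" "ps y < pi/2" using pi_gt3 unfolding ps_def by linarith+
  then show ?thesis by (intro cos_gt_zero_pi) auto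
qed

lemma emb_eq_iff:
  "emb p = emb q \<longleftrightarrow> (E1 p = E1 q \<and> E2 p = E2 q \<and> E3 p = E3 q \<and> E4 p = E4 q \<and> E5 p = E5 q)"
proof
  assume "emb p = emb q" thus "E1 p = E1 q \<and> E2 p = E2 q \<and> E3 p = E3 q \<and> E4 p = E4 q \<and> E5 p = E5 q"
    by (metis emb_nth)
next
  assume H: "E1 p = E1 q \<and> E2 p = E2 q \<and> E3 p = E3 q \<and> E4 p = E4 q \<and> E5 p = E5 q"
  show "emb p = emb q"
    unfolding vec_eq_iff
  proof (intro allI)
    fix i :: 5
    show "emb p $ i = emb q $ i" using exhaust_5[of i] H by auto
  qed
qed

lemma deck_imp_emb_eq:
  assumes "deck_equiv p q"
  shows "emb p = emb q"
proof -
  obtain k m n :: int where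
    q1: "q $ 1 = (if even k then 1 else -1) * p $ 1 + of_int m" and
    q2: "q $ 2 = (if even k then 1 else -1) * p $ 2 + of_int n" and
    q3: "q $ 3 = p $ 3 + of_int k"
    using assms unfolding deck_equiv_def Let_def by blast
  have c3: "cos (2*pi*q$3) = cos (2*pi*p$3)" "sin (2*pi*q$3) = sin (2*pi*p$3)"
    by (simp_all add: q3 cos2pi_int sin2pi_int)
  show ?thesis
  proof (cases "even k")
    case True
    have c1: "cos (2*pi*q$1) = cos (2*pi*p$1)" "sin (2*pi*q$1) = sin (2*pi*p$1)"
      using True by (simp_all add: q1 cos2pi_int sin2pi_int)
    have c2: "bt (q$2) = bt (p$2)" "ps (q$2) = ps (p$2)"
      using True by (simp_all add: bt_def ps_def q2 cos2pi_int sin2pi_int)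
    have c4: "cos (pi*q$3) = cos (pi*p$3)" "sin (pi*q$3) = sin (pi*p$3)"
      using True by (simp_all add: q3 cospi_int sinpi_int)
    show ?thesis
      unfolding emb_eq_iff
      by (auto simp: E1_def E2_def E3_def E4_def E5_def c1 c2 c3 c4)
  next
    case False
    have c1: "cos (2*pi*q$1) = cos (2*pi*p$1)" "sin (2*pi*q$1) = - sin (2*pi*p$1)"
    proof -
      have e: "q$1 = - p$1 + of_int m" using False q1 by simp
      have "cos (2*pi*q$1) = cos (2*pi*(- p$1))" "sin (2*pi*q$1) = sin (2*pi*(- p$1))"
        by (simp_all only: e cos2pi_int sin2pi_int)
      then show "cos (2*pi*q$1) = cos (2*pi*p$1)" "sin (2*pi*q$1) = - sin (2*pi*p$1)"
        by simp_all
    qed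
    have c2': "cos (2*pi*q$2) = cos (2*pi*p$2)" "sin (2*pi*q$2) = - sin (2*pi*p$2)"
    proof -
      have e: "q$2 = - p$2 + of_int n" using False q2 by simp
      have "cos (2*pi*q$2) = cos (2*pi*(- p$2))" "sin (2*pi*q$2) = sin (2*pi*(- p$2))"
        by (simp_all only: e cos2pi_int sin2pi_int)
      then show "cos (2*pi*q$2) = cos (2*pi*p$2)" "sin (2*pi*q$2) = - sin (2*pi*p$2)"
        by simp_all
    qed
    have c2: "bt (q$2) = bt (p$2)" "ps (q$2) = - ps (p$2)"
      by (simp_all add: bt_def ps_def c2')
    have c4: "cos (pi*q$3) = - cos (pi*p$3)" "sin (pi*q$3) = - sin (pi*p$3)"
      using False by (simp_all add: q3 cospi_int sinpi_int)
    show ?thesis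
      unfolding emb_eq_iff E1_def E2_def E3_def E4_def E5_def
      by (simp only: c1 c2 c3 c4 cos_minus sin_minus) (simp add: algebra_simps)
  qed
qed



lemma rot_inv:
  fixes cH sH a b a' b' :: real
  assumes "cH^2 + sH^2 = 1" "cH*a - sH*b = cH*a' - sH*b'" "sH*a + cH*b = sH*a' + cH*b'"
  shows "a' = a" "b' = b"
proof -
  have "a = cH*(cH*a - sH*b) + sH*(sH*a + cH*b)" using assms(1) by algebra
  also have "\<dots> = a'" using assms by algebra
  finally show "a' = a" by simp
  have "b = cH*(sH*a + cH*b) - sH*(cH*a - sH*b)" using assms(1) by algebra
  also have "\<dots> = b'" using assms by algebra
  finally show "b' = b" by simp
qed

lemma rot_inv_neg:
  fixes cH sH a b a' b' :: real
  assumes "cH^2 + sH^2 = 1" "cH*a - sH*b = (- cH)*a' - (- sH)*b'"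
     "sH*a + cH*b = (- sH)*a' + (- cH)*b'"
  shows "a' = - a" "b' = - b"
proof -
  have "cH*a - sH*b = cH*(-a') - sH*(-b')" "sH*a + cH*b = sH*(-a') + cH*(-b')"
    using assms by (simp_all add: algebra_simps)
  from rot_inv[OF assms(1) this] show "a' = - a" "b' = - b" by simp_all
qed

lemma sin_inj:
  fixes a b :: real
  shows "-(pi/2) \<le> a \<Longrightarrow> a \<le> pi/2 \<Longrightarrow> -(pi/2) \<le> b \<Longrightarrow> b \<le> pi/2 \<Longrightarrow> sin a = sin b \<Longrightarrow> a = b"
  by (metis arcsin_sin)

lemma cancel2pi:
  fixes a b :: real
  assumes "2*pi*a = 2*pi*b + 2*pi* of_int n"
  shows "a = b + of_int n"
proof -
  have "2*pi*a = 2*pi*(b + of_int n)" using assms by (simp add: distrib_left)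
  then show ?thesis by simp
qed

lemma emb_eq_imp_deck:
  assumes "emb p = emb q"
  shows "deck_equiv p q"
proof -
  define x where "x = p$1"
  define y where "y = p$2"
  define z where "z = p$3"
  define x' where "x' = q$1"
  define y' where "y' = q$2"
  define z' where "z' = q$3"
  have E: "E1 p = E1 q" "E2 p = E2 q" "E3 p = E3 q" "E4 p = E4 q" "E5 p = E5 q"
    using assms unfolding emb_eq_iff by auto
  define A where "A = cos (bt y)"
  define A' where "A' = cos (bt y')"
  have Apos: "0 < A" "0 < A'" unfolding A_def A'_def by (simp_all add: cos_bt_pos)
  have h1: "A * cos (2*pi*z) = A' * cos (2*pi*z')" "A * sin (2*pi*z) = A' * sin (2*pi*z')"
    using E(1,2) unfolding E1_def E2_def A_def A'_def x_def y_def z_def x'_def y'_def z'_def by auto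
  have "A^2 = (A * cos (2*pi*z))^2 + (A * sin (2*pi*z))^2"
    by (simp add: power_mult_distrib flip: distrib_left)
  also have "\<dots> = (A' * cos (2*pi*z'))^2 + (A' * sin (2*pi*z'))^2" by (simp only: h1)
  also have "\<dots> = A'^2"
    by (simp add: power_mult_distrib flip: distrib_left)
  finally have "A = A'" using Apos by (simp add: power2_eq_iff_nonneg)
  then have cz: "cos (2*pi*z') = cos (2*pi*z)" "sin (2*pi*z') = sin (2*pi*z)"
    using h1 Apos by auto
  obtain k :: int where "2*pi*z' = 2*pi*z + 2*pi* of_int k"
    using cos_sin_eq_int[OF cz] by blast
  then have zk: "z' = z + of_int k" by (rule cancel2pi)
  have "cos (bt y) = cos (bt y')" using \<open>A = A'\<close> unfolding A_def A'_def .
  moreover have "0 \<le> bt y" "bt y \<le> pi" "0 \<le> bt y'" "bt y' \<le> pi"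
    using bt_bounds[of y] bt_bounds[of y'] by linarith+
  ultimately have "bt y = bt y'" using cos_inj_pi by blast
  then have cy: "cos (2*pi*y') = cos (2*pi*y)" by (simp add: bt_def)
  define B where "B = sin (bt y)"
  have Bpos: "0 < B" unfolding B_def by (simp add: sin_bt_pos)
  have B': "sin (bt y') = B" unfolding B_def using \<open>bt y = bt y'\<close> by simp
  have h3: "cos (ps y) * cos (2*pi*x) = cos (ps y') * cos (2*pi*x')"
    using E(3) Bpos unfolding E3_def B'[unfolded y'_def] B_def[symmetric, unfolded y_def]
      x_def y_def x'_def y'_def by simp
  have h4: "cos (pi*z) * (cos (ps y) * sin (2*pi*x)) - sin (pi*z) * sin (ps y) =
      cos (pi*z') * (cos (ps y') * sin (2*pi*x')) - sin (pi*z') * sin (ps y')"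
    using E(4) Bpos unfolding E4_def B'[unfolded y'_def] B_def[symmetric, unfolded y_def]
      x_def y_def z_def x'_def y'_def z'_def by simp
  have h5: "sin (pi*z) * (cos (ps y) * sin (2*pi*x)) + cos (pi*z) * sin (ps y) =
      sin (pi*z') * (cos (ps y') * sin (2*pi*x')) + cos (pi*z') * sin (ps y')"
    using E(5) Bpos unfolding E5_def B'[unfolded y'_def] B_def[symmetric, unfolded y_def]
      x_def y_def z_def x'_def y'_def z'_def by simp
  have sc: "cos (pi*z)^2 + sin (pi*z)^2 = 1" by simp
  show ?thesis
  proof (cases "even k")
    case True
    have cH: "cos (pi*z') = cos (pi*z)" and sH: "sin (pi*z') = sin (pi*z)"
      using True by (simp_all add: zk cospi_int sinpi_int)
    have r: "cos (ps y') * sin (2*pi*x') = cos (ps y) * sin (2*pi*x)"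
        "sin (ps y') = sin (ps y)"
      using rot_inv[OF sc h4[unfolded cH sH] h5[unfolded cH sH]] by auto
    have "ps y' = ps y" by (rule sin_inj) (use r(2) ps_bounds[of y] ps_bounds[of y'] in linarith)+
    then have sy: "sin (2*pi*y') = sin (2*pi*y)" by (simp add: ps_def)
    obtain n :: int where "2*pi*y' = 2*pi*y + 2*pi* of_int n"
      using cos_sin_eq_int[OF cy sy] by blast
    then have yn: "y' = y + of_int n" by (rule cancel2pi)
    have cp: "cos (ps y') = cos (ps y)" using \<open>ps y' = ps y\<close> by simp
    have cx: "cos (2*pi*x') = cos (2*pi*x)" "sin (2*pi*x') = sin (2*pi*x)"
      using h3 r(1) cos_ps_pos[of y] unfolding cp by auto
    obtain m :: int where "2*pi*x' = 2*pi*x + 2*pi* of_int m"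
      using cos_sin_eq_int[OF cx] by blast
    then have xm: "x' = x + of_int m" by (rule cancel2pi)
    show ?thesis unfolding deck_equiv_def Let_def
      using True xm yn zk unfolding x_def y_def z_def x'_def y'_def z'_def
      by (intro exI[of _ k] exI[of _ m] exI[of _ n]) simp
  next
    case False
    have cH: "cos (pi*z') = - cos (pi*z)" and sH: "sin (pi*z') = - sin (pi*z)"
      using False by (simp_all add: zk cospi_int sinpi_int)
    have r: "cos (ps y') * sin (2*pi*x') = - (cos (ps y) * sin (2*pi*x))"
        "sin (ps y') = - sin (ps y)"
      using rot_inv_neg[OF sc h4[unfolded cH sH] h5[unfolded cH sH]] by auto
    have "sin (ps y') = sin (- ps y)" using r(2) by simp
    then have "ps y' = - ps y" by (rule sin_inj[rotated 4]) (use ps_bounds[of y] ps_bounds[of y'] in linarith)+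
    then have sy: "sin (2*pi*y') = sin (2*pi*(-y))" by (simp add: ps_def)
    have cy': "cos (2*pi*y') = cos (2*pi*(-y))" using cy by simp
    obtain n :: int where "2*pi*y' = 2*pi*(-y) + 2*pi* of_int n"
      using cos_sin_eq_int[OF cy' sy] by blast
    then have yn: "y' = - y + of_int n" by (rule cancel2pi)
    have cp: "cos (ps y') = cos (ps y)" using \<open>ps y' = - ps y\<close> by simp
    have "cos (ps y) * sin (2*pi*x') = cos (ps y) * (- sin (2*pi*x))"
      using r(1) unfolding cp by simp
    then have "sin (2*pi*x') = - sin (2*pi*x)"
      using cos_ps_pos[of y] by (simp only: mult_cancel_left) simp
    then have cx: "cos (2*pi*x') = cos (2*pi*(-x))" "sin (2*pi*x') = sin (2*pi*(-x))"
      using h3 cos_ps_pos[of y] unfolding cp by auto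
    obtain m :: int where "2*pi*x' = 2*pi*(-x) + 2*pi* of_int m"
      using cos_sin_eq_int[OF cx] by blast
    then have xm: "x' = - x + of_int m" by (rule cancel2pi)
    show ?thesis unfolding deck_equiv_def Let_def
      using False xm yn zk unfolding x_def y_def z_def x'_def y'_def z'_def
      by (intro exI[of _ k] exI[of _ m] exI[of _ n]) simp
  qed
qed



lemma kernel_alg:
  fixes cB sB cZ sZ cT sT cP sP cH sH cY sY Bd Pd a b c :: real
  assumes pos: "0 < cB" "0 < sB" "0 < cP" "0 < pi"
  and id: "cZ^2 + sZ^2 = 1" "cT^2 + sT^2 = 1" "cP^2 + sP^2 = 1" "cH^2 + sH^2 = 1"
          "cY^2 + sY^2 = 1"
  and Bd: "Bd = - pi * sY" and Pd: "Pd = pi * cY"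
  and D1: "- sB*Bd*b*cZ - cB* sZ*(2*pi)*c = 0"
  and D2: "- sB*Bd*b* sZ + cB*cZ*(2*pi)*c = 0"
  and D3: "cB*Bd*b*(cP*cT) + sB*(- sP*Pd*b*cT - cP* sT*(2*pi)*a) = 0"
  and D4: "cB*Bd*b*(cH*(cP* sT) - sH* sP)
       + sB*(cH*(- sP*Pd*b* sT + cP*cT*(2*pi)*a) - sH*(cP*Pd*b) + pi*c*(- sH*(cP* sT) - cH* sP)) = 0"
  and D5: "cB*Bd*b*(sH*(cP* sT) + cH* sP)
       + sB*(sH*(- sP*Pd*b* sT + cP*cT*(2*pi)*a) + cH*(cP*Pd*b) + pi*c*(cH*(cP* sT) - sH* sP)) = 0"
  shows "a = 0 \<and> b = 0 \<and> c = 0"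
proof -
  have "cB*(2*pi)*c = cZ*(- sB*Bd*b* sZ + cB*cZ*(2*pi)*c) - sZ*(- sB*Bd*b*cZ - cB* sZ*(2*pi)*c)"
    using id(1) by algebra
  then have "cB*(2*pi)*c = 0" unfolding D1 D2 by simp
  then have c0: "c = 0" using pos by simp
  have "- sB*Bd*b = cZ*(- sB*Bd*b*cZ - cB* sZ*(2*pi)*c) + sZ*(- sB*Bd*b* sZ + cB*cZ*(2*pi)*c)"
    using id(1) by algebra
  then have "sB*Bd*b = 0" unfolding D1 D2 by simp
  then have sb: "sY*b = 0" using pos Bd by simp
  define G2 where "G2 = cB*Bd*b*(cP* sT) + sB*(- sP*Pd*b* sT + cP*cT*(2*pi)*a)"
  define G3 where "G3 = cB*Bd*b* sP + sB*(cP*Pd*b)"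
  have "G2 = cH * (cB*Bd*b*(cH*(cP* sT) - sH* sP)
       + sB*(cH*(- sP*Pd*b* sT + cP*cT*(2*pi)*a) - sH*(cP*Pd*b) + pi*c*(- sH*(cP* sT) - cH* sP)))
     + sH * (cB*Bd*b*(sH*(cP* sT) + cH* sP)
       + sB*(sH*(- sP*Pd*b* sT + cP*cT*(2*pi)*a) + cH*(cP*Pd*b) + pi*c*(cH*(cP* sT) - sH* sP)))"
    unfolding G2_def c0 using id(4) by algebra
  then have G2: "G2 = 0" unfolding D4 D5 by simp
  have "G3 = - sH * (cB*Bd*b*(cH*(cP* sT) - sH* sP)
       + sB*(cH*(- sP*Pd*b* sT + cP*cT*(2*pi)*a) - sH*(cP*Pd*b) + pi*c*(- sH*(cP* sT) - cH* sP)))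
     + cH * (cB*Bd*b*(sH*(cP* sT) + cH* sP)
       + sB*(sH*(- sP*Pd*b* sT + cP*cT*(2*pi)*a) + cH*(cP*Pd*b) + pi*c*(cH*(cP* sT) - sH* sP)))"
    unfolding G3_def c0 using id(4) by algebra
  then have G3: "G3 = 0" unfolding D4 D5 by simp
  have "sB*cP*(2*pi)*a = - sT*(cB*Bd*b*(cP*cT) + sB*(- sP*Pd*b*cT - cP* sT*(2*pi)*a)) + cT*G2"
    unfolding G2_def using id(2) by algebra
  then have "sB*cP*(2*pi)*a = 0" unfolding D3 G2 by simp
  then have a0: "a = 0" using pos by simp
  have "sB*Pd*b = - sP*cT*(cB*Bd*b*(cP*cT) + sB*(- sP*Pd*b*cT - cP* sT*(2*pi)*a)) - sP* sT*G2 + cP*G3"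
    unfolding G2_def G3_def a0 using id(2,3) by algebra
  then have "sB*Pd*b = 0" unfolding D3 G2 G3 by simp
  then have cb: "cY*b = 0" using pos Pd by simp
  have "b = cY*(cY*b) + sY*(sY*b)" using id(5) by algebra
  then have "b = 0" using sb cb by simp
  with a0 c0 show ?thesis by simp
qed



lemma has_derivative_vec_nth' [derivative_intros]:
  "((\<lambda>x::real^'n. x $ i) has_derivative (\<lambda>h. h $ i)) F"
  by (rule bounded_linear_imp_has_derivative) (rule bounded_linear_vec_nth)

definition DE1 :: "real^3 \<Rightarrow> real^3 \<Rightarrow> real" where "DE1 p v = - sin (bt (p$2)) * (- pi * sin (2*pi*p$2)) * v$2 * cos (2*pi*p$3)
   - cos (bt (p$2)) * sin (2*pi*p$3) * (2*pi) * v$3"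
definition DE2 :: "real^3 \<Rightarrow> real^3 \<Rightarrow> real" where "DE2 p v = - sin (bt (p$2)) * (- pi * sin (2*pi*p$2)) * v$2 * sin (2*pi*p$3)
   + cos (bt (p$2)) * cos (2*pi*p$3) * (2*pi) * v$3"
definition DE3 :: "real^3 \<Rightarrow> real^3 \<Rightarrow> real" where "DE3 p v = cos (bt (p$2)) * (- pi * sin (2*pi*p$2)) * v$2 * (cos (ps (p$2)) * cos (2*pi*p$1))
   + sin (bt (p$2)) * (- sin (ps (p$2)) * (pi * cos (2*pi*p$2)) * v$2 * cos (2*pi*p$1)
       - cos (ps (p$2)) * sin (2*pi*p$1) * (2*pi) * v$1)"
definition DE4 :: "real^3 \<Rightarrow> real^3 \<Rightarrow> real" where "DE4 p v = cos (bt (p$2)) * (- pi * sin (2*pi*p$2)) * v$2 *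
       (cos (pi*p$3) * (cos (ps (p$2)) * sin (2*pi*p$1)) - sin (pi*p$3) * sin (ps (p$2)))
   + sin (bt (p$2)) * (cos (pi*p$3) * (- sin (ps (p$2)) * (pi * cos (2*pi*p$2)) * v$2 * sin (2*pi*p$1)
        + cos (ps (p$2)) * cos (2*pi*p$1) * (2*pi) * v$1)
      - sin (pi*p$3) * (cos (ps (p$2)) * (pi * cos (2*pi*p$2)) * v$2)
      + pi * v$3 * (- sin (pi*p$3) * (cos (ps (p$2)) * sin (2*pi*p$1)) - cos (pi*p$3) * sin (ps (p$2))))"
definition DE5 :: "real^3 \<Rightarrow> real^3 \<Rightarrow> real" where "DE5 p v = cos (bt (p$2)) * (- pi * sin (2*pi*p$2)) * v$2 *
       (sin (pi*p$3) * (cos (ps (p$2)) * sin (2*pi*p$1)) + cos (pi*p$3) * sin (ps (p$2)))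
   + sin (bt (p$2)) * (sin (pi*p$3) * (- sin (ps (p$2)) * (pi * cos (2*pi*p$2)) * v$2 * sin (2*pi*p$1)
        + cos (ps (p$2)) * cos (2*pi*p$1) * (2*pi) * v$1)
      + cos (pi*p$3) * (cos (ps (p$2)) * (pi * cos (2*pi*p$2)) * v$2)
      + pi * v$3 * (cos (pi*p$3) * (cos (ps (p$2)) * sin (2*pi*p$1)) - sin (pi*p$3) * sin (ps (p$2))))"

lemma E1_deriv: "(E1 has_derivative DE1 p) (at p)"
  unfolding E1_def[abs_def] DE1_def[abs_def] bt_def
  by (auto intro!: derivative_eq_intros ext simp: algebra_simps)
lemma E2_deriv: "(E2 has_derivative DE2 p) (at p)"
  unfolding E2_def[abs_def] DE2_def[abs_def] bt_def
  by (auto intro!: derivative_eq_intros ext simp: algebra_simps)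
lemma E3_deriv: "(E3 has_derivative DE3 p) (at p)"
  unfolding E3_def[abs_def] DE3_def[abs_def] bt_def ps_def
  by (auto intro!: derivative_eq_intros ext simp: algebra_simps)
lemma E4_deriv: "(E4 has_derivative DE4 p) (at p)"
  unfolding E4_def[abs_def] DE4_def[abs_def] bt_def ps_def
  by (auto intro!: derivative_eq_intros ext simp: algebra_simps)
lemma E5_deriv: "(E5 has_derivative DE5 p) (at p)"
  unfolding E5_def[abs_def] DE5_def[abs_def] bt_def ps_def
  by (auto intro!: derivative_eq_intros ext simp: algebra_simps)

definition Lemb :: "real^3 \<Rightarrow> real^3 \<Rightarrow> real^5" where "Lemb p v = (\<chi> k. if k = 1 then DE1 p v else if k = 2 then DE2 p v else if k = 3 then DE3 p v
             else if k = 4 then DE4 p v else DE5 p v)"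

lemma Lemb_nth [simp]:
  "Lemb p v $ 1 = DE1 p v" "Lemb p v $ 2 = DE2 p v" "Lemb p v $ 3 = DE3 p v"
  "Lemb p v $ 4 = DE4 p v" "Lemb p v $ 5 = DE5 p v"
  by (simp_all add: Lemb_def)

lemma emb_deriv: "(emb has_derivative Lemb p) (at p)"
proof (rule has_derivative_vecI)
  fix i :: 5
  show "((\<lambda>x. emb x $ i) has_derivative (\<lambda>h. Lemb p h $ i)) (at p)"
    using exhaust_5[of i] E1_deriv[of p] E2_deriv[of p] E3_deriv[of p] E4_deriv[of p] E5_deriv[of p]
    by (auto simp del: Lemb_nth simp add: Lemb_nth[abs_def] emb_nth[abs_def])
qed

lemma Lemb_kernel:
  assumes "Lemb p v = 0"
  shows "v = 0"
proof -
  have h: "DE1 p v = 0" "DE2 p v = 0" "DE3 p v = 0" "DE4 p v = 0" "DE5 p v = 0"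
    using assms by (metis Lemb_nth zero_index)+
  have "v$1 = 0 \<and> v$2 = 0 \<and> v$3 = 0"
    apply (rule kernel_alg[where cB="cos (bt (p$2))" and sB="sin (bt (p$2))"
        and cZ="cos (2*pi*p$3)" and sZ="sin (2*pi*p$3)" and cT="cos (2*pi*p$1)" and sT="sin (2*pi*p$1)"
        and cP="cos (ps (p$2))" and sP="sin (ps (p$2))" and cH="cos (pi*p$3)" and sH="sin (pi*p$3)"
        and cY="cos (2*pi*p$2)" and sY="sin (2*pi*p$2)"
        and Bd="- pi * sin (2*pi*p$2)" and Pd="pi * cos (2*pi*p$2)"])
    using cos_bt_pos sin_bt_pos cos_ps_pos h[unfolded DE1_def DE2_def DE3_def DE4_def DE5_def]
    by simp_all
  then show ?thesis
    unfolding vec_eq_iff using exhaust_3 by (metis zero_index)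
qed

lemma emb_immersion: "inj (frechet_derivative emb (at p))"
proof -
  have fe: "frechet_derivative emb (at p) = Lemb p"
    using emb_deriv[of p] by (metis frechet_derivative_at)
  have lin: "linear (Lemb p)"
    using emb_deriv[of p] has_derivative_bounded_linear bounded_linear.linear by blast
  show ?thesis unfolding fe
  proof (rule injI)
    fix u w assume "Lemb p u = Lemb p w"
    then have "Lemb p (u - w) = 0" using lin by (simp add: linear_diff)
    then have "u - w = 0" by (rule Lemb_kernel)
    then show "u = w" by simp
  qed
qed

theorem mainTheorem8:
  shows "\<exists>f :: real^3 \<Rightarrow> real^5. smooth_embeds_B_in_S4 f"
  unfolding smooth_embeds_B_in_S4_def
  using emb_smooth emb_sphere emb_immersion emb_eq_imp_deck deck_imp_emb_eq by blast

end
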